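(* Let $L$ be a finite-dimensional semisimple Leibniz algebra over $\mathbb{C}$, written as $L=(\oplus_{i=1}^m\mathfrak{g}_i)\ltimes(\oplus_{k=1}^n I_k)$, where $\mathfrak{g}_1,\dots,\mathfrak{g}_m$ are simple Lie subalgebras whose direct sum is a subalgebra of $L$ complementary to $I$ and isomorphic to the liezation $\mathfrak{g}_L$, and $I=\oplus_{k=1}^n I_k$ is a decomposition of $I$ into simple $(\oplus_{i=1}^m\mathfrak{g}_i)$-submodules (with respect to the right action $i.g=[i,g]$). Then for all $1\le i\le m$ and $1\le k\le n$, either $[I_k,\mathfrak{g}_i]=I_k$ or $[I_k,\mathfrak{g}_i]=\{0\}$.
   Context: A Leibniz algebra is a vector space $L$ with a bilinear bracket satisfying $[[x,y],z]=[[x,z],y]+[x,[y,z]]$ for all $x,y,z\in L$. The subspace $I=\mathrm{Span}\langle [x,x]\mid x\in L\rangle$ is an ideal with $[L,I]=0$; the quotient $\mathfrak{g}_L=L/I$ is a Lie algebra (the liezation). $L$ is semisimple if $\mathfrak{g}_L$ is a semisimple Lie algebra. In that case $L$ contains a subalgebra isomorphic to $\mathfrak{g}_L$ complementary to $I$, so $L$ admits a decomposition as in the claim; $[I_k,\mathfrak{g}_i]$ denotes the span of brackets $[x,y]$ with $x\in I_k$, $y\in\mathfrak{g}_i$. *)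

theory Defs
  imports Complex_Main
begin

text \<open>A vector space over the complex numbers is given by a scalar multiplication
  sc :: complex => 'a => 'a satisfying the vector space axioms; the algebra L is the
  whole type 'a, and b is the bracket.\<close>

definition leibniz_algebra :: "(complex \<Rightarrow> 'a::ab_group_add \<Rightarrow> 'a) \<Rightarrow> ('a \<Rightarrow> 'a \<Rightarrow> 'a) \<Rightarrow> bool" where
  "leibniz_algebra sc b \<longleftrightarrow> vector_space sc
     \<and> (\<forall>x. Vector_Spaces.linear sc sc (b x)) \<and> (\<forall>y. Vector_Spaces.linear sc sc (\<lambda>x. b x y))
     \<and> (\<forall>x y z. b (b x y) z = b (b x z) y + b x (b y z))"

definition fin_dim :: "(complex \<Rightarrow> 'a::ab_group_add \<Rightarrow> 'a) \<Rightarrow> bool" where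
  "fin_dim sc \<longleftrightarrow> (\<exists>B. finite B \<and> module.span sc B = UNIV)"

definition bracket_span :: "(complex \<Rightarrow> 'a::ab_group_add \<Rightarrow> 'a) \<Rightarrow> ('a \<Rightarrow> 'a \<Rightarrow> 'a) \<Rightarrow> 'a set \<Rightarrow> 'a set \<Rightarrow> 'a set" where
  "bracket_span sc b A B = module.span sc {b x y | x y. x \<in> A \<and> y \<in> B}"

definition leibniz_kernel :: "(complex \<Rightarrow> 'a::ab_group_add \<Rightarrow> 'a) \<Rightarrow> ('a \<Rightarrow> 'a \<Rightarrow> 'a) \<Rightarrow> 'a set" where
  "leibniz_kernel sc b = module.span sc {b x x | x. True}"

definition subalgebra :: "(complex \<Rightarrow> 'a::ab_group_add \<Rightarrow> 'a) \<Rightarrow> ('a \<Rightarrow> 'a \<Rightarrow> 'a) \<Rightarrow> 'a set \<Rightarrow> bool" where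
  "subalgebra sc b S \<longleftrightarrow> module.subspace sc S \<and> (\<forall>x\<in>S. \<forall>y\<in>S. b x y \<in> S)"

definition lie_subalgebra :: "(complex \<Rightarrow> 'a::ab_group_add \<Rightarrow> 'a) \<Rightarrow> ('a \<Rightarrow> 'a \<Rightarrow> 'a) \<Rightarrow> 'a set \<Rightarrow> bool" where
  "lie_subalgebra sc b S \<longleftrightarrow> subalgebra sc b S \<and> (\<forall>x\<in>S. b x x = 0)"

definition ideal_of :: "(complex \<Rightarrow> 'a::ab_group_add \<Rightarrow> 'a) \<Rightarrow> ('a \<Rightarrow> 'a \<Rightarrow> 'a) \<Rightarrow> 'a set \<Rightarrow> 'a set \<Rightarrow> bool" where
  "ideal_of sc b g J \<longleftrightarrow> module.subspace sc J \<and> J \<subseteq> g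
     \<and> (\<forall>x\<in>J. \<forall>y\<in>g. b x y \<in> J \<and> b y x \<in> J)"

definition simple_lie_subalgebra :: "(complex \<Rightarrow> 'a::ab_group_add \<Rightarrow> 'a) \<Rightarrow> ('a \<Rightarrow> 'a \<Rightarrow> 'a) \<Rightarrow> 'a set \<Rightarrow> bool" where
  "simple_lie_subalgebra sc b g \<longleftrightarrow> lie_subalgebra sc b g
     \<and> (\<exists>x\<in>g. \<exists>y\<in>g. b x y \<noteq> 0)
     \<and> (\<forall>J. ideal_of sc b g J \<longrightarrow> J = {0} \<or> J = g)"

definition direct_sum :: "(complex \<Rightarrow> 'a::ab_group_add \<Rightarrow> 'a) \<Rightarrow> ('i \<Rightarrow> 'a set) \<Rightarrow> 'i set \<Rightarrow> 'a set \<Rightarrow> bool" where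
  "direct_sum sc V A W \<longleftrightarrow> (\<forall>i\<in>A. module.subspace sc (V i))
     \<and> W = {(\<Sum>i\<in>A. v i) | v. \<forall>i\<in>A. v i \<in> V i}
     \<and> (\<forall>v. (\<forall>i\<in>A. v i \<in> V i) \<and> (\<Sum>i\<in>A. v i) = 0 \<longrightarrow> (\<forall>i\<in>A. v i = 0))"

definition right_submodule :: "(complex \<Rightarrow> 'a::ab_group_add \<Rightarrow> 'a) \<Rightarrow> ('a \<Rightarrow> 'a \<Rightarrow> 'a) \<Rightarrow> 'a set \<Rightarrow> 'a set \<Rightarrow> bool" where
  "right_submodule sc b S M \<longleftrightarrow> module.subspace sc M \<and> (\<forall>x\<in>M. \<forall>y\<in>S. b x y \<in> M)"

definition simple_right_module :: "(complex \<Rightarrow> 'a::ab_group_add \<Rightarrow> 'a) \<Rightarrow> ('a \<Rightarrow> 'a \<Rightarrow> 'a) \<Rightarrow> 'a set \<Rightarrow> 'a set \<Rightarrow> bool" where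
  "simple_right_module sc b S M \<longleftrightarrow> right_submodule sc b S M \<and> M \<noteq> {0}
     \<and> (\<forall>N. right_submodule sc b S N \<and> N \<subseteq> M \<longrightarrow> N = {0} \<or> N = M)"

end

theory Submission
  imports Defs
begin

theorem proposition3p1:
  fixes sc :: "complex \<Rightarrow> 'a::ab_group_add \<Rightarrow> 'a"
    and b :: "'a \<Rightarrow> 'a \<Rightarrow> 'a"
    and g :: "nat \<Rightarrow> 'a set" and Ik :: "nat \<Rightarrow> 'a set" and S :: "'a set"
    and m n :: nat
  assumes leib: "leibniz_algebra sc b"
    and fd: "fin_dim sc"
    and g_simple: "\<forall>i\<in>{1..m}. simple_lie_subalgebra sc b (g i)"
    and g_comm: "\<forall>i\<in>{1..m}. \<forall>j\<in>{1..m}. i \<noteq> j \<longrightarrow> (\<forall>x\<in>g i. \<forall>y\<in>g j. b x y = 0)"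
    and S_sum: "direct_sum sc g {1..m} S"
    and S_sub: "subalgebra sc b S"
    and S_compl1: "S \<inter> leibniz_kernel sc b = {0}"
    and S_compl2: "\<forall>x. \<exists>s\<in>S. \<exists>t\<in>leibniz_kernel sc b. x = s + t"
    and I_sum: "direct_sum sc Ik {1..n} (leibniz_kernel sc b)"
    and I_simple: "\<forall>k\<in>{1..n}. simple_right_module sc b S (Ik k)"
  shows "\<forall>i\<in>{1..m}. \<forall>k\<in>{1..n}.
           bracket_span sc b (Ik k) (g i) = Ik k \<or> bracket_span sc b (Ik k) (g i) = {0}"
proof (intro ballI)
  fix i k assume i: "i \<in> {1..m}" and k: "k \<in> {1..n}"
  have vs: "vector_space sc" using leib unfolding leibniz_algebra_def by blast
  have md: "module sc" using vs by (simp add: module_iff_vector_space)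
  have linL: "\<And>x. module_hom sc sc (b x)"
    using leib unfolding leibniz_algebra_def by (simp add: linear_iff_module_hom)
  have linR: "\<And>y. module_hom sc sc (\<lambda>x. b x y)"
    using leib unfolding leibniz_algebra_def by (simp add: linear_iff_module_hom)
  have jac: "\<And>x y z. b (b x y) z = b (b x z) y + b x (b y z)"
    using leib unfolding leibniz_algebra_def by blast
  have gsub: "\<And>j. j \<in> {1..m} \<Longrightarrow> module.subspace sc (g j)"
    using S_sum unfolding direct_sum_def by blast
  have Sdef: "S = {(\<Sum>j\<in>{1..m}. v j) | v. \<forall>j\<in>{1..m}. v j \<in> g j}"
    using S_sum unfolding direct_sum_def by blast
  have gi_lie: "lie_subalgebra sc b (g i)" using g_simple i unfolding simple_lie_subalgebra_def by blast
  hence gi_cl: "\<And>x y. x \<in> g i \<Longrightarrow> y \<in> g i \<Longrightarrow> b x y \<in> g i"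
    unfolding lie_subalgebra_def subalgebra_def by blast
  have giS: "g i \<subseteq> S"
  proof
    fix x assume x: "x \<in> g i"
    define v where "v = (\<lambda>j. if j = i then x else 0)"
    have "\<forall>j\<in>{1..m}. v j \<in> g j"
      using x gsub module.subspace_0[OF md] unfolding v_def by auto
    moreover have "(\<Sum>j\<in>{1..m}. v j) = x" using i unfolding v_def by simp
    ultimately show "x \<in> S" unfolding Sdef by blast
  qed
  have brS: "b y s \<in> g i" if y: "y \<in> g i" and s: "s \<in> S" for y s
  proof -
    obtain v where v: "\<forall>j\<in>{1..m}. v j \<in> g j" and sv: "s = (\<Sum>j\<in>{1..m}. v j)"
      using s unfolding Sdef by blast
    have "b y s = (\<Sum>j\<in>{1..m}. b y (v j))" unfolding sv by (rule module_hom.sum[OF linL])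
    also have "\<dots> = b y (v i) + (\<Sum>j\<in>{1..m} - {i}. b y (v j))"
      using i by (simp add: sum.remove)
    also have "(\<Sum>j\<in>{1..m} - {i}. b y (v j)) = 0"
    proof (intro sum.neutral ballI)
      fix j assume j: "j \<in> {1..m} - {i}"
      hence "j \<in> {1..m}" "i \<noteq> j" by auto
      thus "b y (v j) = 0" using g_comm i y v by blast
    qed
    finally show ?thesis using gi_cl y v i by simp
  qed
  define Gen where "Gen = {b x y | x y. x \<in> Ik k \<and> y \<in> g i}"
  have Jdef: "bracket_span sc b (Ik k) (g i) = module.span sc Gen"
    unfolding bracket_span_def Gen_def ..
  have Ikrs: "right_submodule sc b S (Ik k)" using I_simple k unfolding simple_right_module_def by blast
  have GenI: "Gen \<subseteq> Ik k" using Ikrs giS unfolding Gen_def right_submodule_def by blast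
  have JI: "module.span sc Gen \<subseteq> Ik k"
    using module.span_minimal[OF md GenI] Ikrs unfolding right_submodule_def by blast
  have Jrs: "right_submodule sc b S (module.span sc Gen)"
    unfolding right_submodule_def
  proof (intro conjI ballI)
    show "module.subspace sc (module.span sc Gen)" using module.subspace_span[OF md] .
    fix x s assume x: "x \<in> module.span sc Gen" and s: "s \<in> S"
    have sub: "module.subspace sc ((\<lambda>x. b x s) -` module.span sc Gen)"
      by (rule module_hom.subspace_vimage[OF linR]) (rule module.subspace_span[OF md])
    have "Gen \<subseteq> (\<lambda>x. b x s) -` module.span sc Gen"
    proof
      fix z assume "z \<in> Gen"
      then obtain u y where u: "u \<in> Ik k" and y: "y \<in> g i" and z: "z = b u y" unfolding Gen_def by blast
      have "b (b u s) y \<in> Gen" using u y s Ikrs unfolding Gen_def right_submodule_def by blast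
      moreover have "b u (b y s) \<in> Gen" using u brS[OF y s] unfolding Gen_def by blast
      ultimately have "b (b u s) y + b u (b y s) \<in> module.span sc Gen"
        using module.subspace_add[OF md module.subspace_span[OF md]] module.span_superset[OF md] by blast
      thus "z \<in> (\<lambda>x. b x s) -` module.span sc Gen" unfolding z vimage_eq jac[of u y s] .
    qed
    from module.span_minimal[OF md this sub] x show "b x s \<in> module.span sc Gen" by blast
  qed
  have "module.span sc Gen = {0} \<or> module.span sc Gen = Ik k"
    using I_simple k Jrs JI unfolding simple_right_module_def by blast
  thus "bracket_span sc b (Ik k) (g i) = Ik k \<or> bracket_span sc b (Ik k) (g i) = {0}"
    unfolding Jdef by blast
qed

end
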